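(* Let $n\geq 1$. The map $\rho_1\mapsto x_1$, $\rho_2\mapsto x_nx_1$, $\rho_3\mapsto x_{n-1}x_nx_1$, $\dots$, $\rho_n\mapsto x_2x_3\cdots x_nx_1$ (i.e. $\rho_k\mapsto x_{n-k+2}x_{n-k+3}\cdots x_nx_1$) extends to a group isomorphism from the group $\langle\rho_1,\dots,\rho_n\mid\rho_1\rho_n\rho_i=\rho_{i+1}\rho_n,\ 1\leq i\leq n-1\rangle$ onto the group $$\langle x_1,\dots,x_n\mid x_1x_2\cdots x_nx_1=x_2x_3\cdots x_nx_1x_2=\cdots=x_nx_1x_2\cdots x_n\rangle$$ (where each word in the chain of equalities is the product of $n+1$ consecutive generators taken cyclically, starting at $x_1$, $x_2$, ..., $x_n$ respectively), with inverse given by $x_1\mapsto\rho_1$, $x_n\mapsto\rho_2\rho_1^{-1}$, $x_{n-1}\mapsto\rho_3\rho_2^{-1}$, $\dots$, $x_2\mapsto\rho_n\rho_{n-1}^{-1}$. *)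

theory Defs
  imports "HOL-Algebra.Algebra"
begin

text \<open>Group presentations. A word over generators of type 'a is a list of letters
(x, True) = x and (x, False) = x^-1.\<close>

type_synonym 'a word = "('a \<times> bool) list"

inductive pres_eq :: "('a word \<times> 'a word) set \<Rightarrow> 'a word \<Rightarrow> 'a word \<Rightarrow> bool"
  for R where
  refl: "pres_eq R w w"
| sym: "pres_eq R u v \<Longrightarrow> pres_eq R v u"
| trans: "pres_eq R u v \<Longrightarrow> pres_eq R v w \<Longrightarrow> pres_eq R u w"
| cong: "pres_eq R u u' \<Longrightarrow> pres_eq R v v' \<Longrightarrow> pres_eq R (u @ v) (u' @ v')"
| cancel: "pres_eq R [(x, b), (x, \<not> b)] []"
| rel: "(u, v) \<in> R \<Longrightarrow> pres_eq R u v"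

definition pres_class :: "('a word \<times> 'a word) set \<Rightarrow> 'a word \<Rightarrow> 'a word set" where
  "pres_class R w = {v. pres_eq R w v}"

definition presented_group :: "'a set \<Rightarrow> ('a word \<times> 'a word) set \<Rightarrow> 'a word set monoid" where
  "presented_group S R =
     \<lparr> carrier = {pres_class R w | w. fst ` set w \<subseteq> S},
       monoid.mult = (\<lambda>A B. \<Union>{pres_class R (u @ v) | u v. u \<in> A \<and> v \<in> B}),
       one = pres_class R [] \<rparr>"

definition pos_word :: "'a list \<Rightarrow> 'a word" where
  "pos_word xs = map (\<lambda>x. (x, True)) xs"

definition inv_word :: "'a word \<Rightarrow> 'a word" where
  "inv_word w = rev (map (\<lambda>(x, b). (x, \<not> b)) w)"

text \<open>Relations \<rho>_1 \<rho>_n \<rho>_i = \<rho>_{i+1} \<rho>_n, 1 \<le> i \<le> n-1 (generators \<rho>_k encoded by k).\<close>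
definition rho_rels :: "nat \<Rightarrow> (nat word \<times> nat word) set" where
  "rho_rels n = {(pos_word [1, n, i], pos_word [i + 1, n]) | i. 1 \<le> i \<and> i \<le> n - 1}"

text \<open>W_j = x_j x_{j+1} ... : product of n+1 consecutive generators cyclically from x_j.\<close>
definition cyc_word :: "nat \<Rightarrow> nat \<Rightarrow> nat word" where
  "cyc_word n j = pos_word (map (\<lambda>t. ((j - 1 + t) mod n) + 1) [0..<n + 1])"

text \<open>Relations W_1 = W_2 = ... = W_n (generators x_j encoded by j).\<close>
definition x_rels :: "nat \<Rightarrow> (nat word \<times> nat word) set" where
  "x_rels n = {(cyc_word n j, cyc_word n (j + 1)) | j. 1 \<le> j \<and> j \<le> n - 1}"

end

theory Submission
  imports Defs
begin


lemma pe_refl[intro,simp]: "pres_eq R w w" by (rule pres_eq.refl)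

lemma pe_congL: "pres_eq R u u' \<Longrightarrow> pres_eq R (a @ u @ b) (a @ u' @ b)"
  by (intro pres_eq.cong pres_eq.refl)

lemma inv_word_append[simp]: "inv_word (u @ v) = inv_word v @ inv_word u"
  by (simp add: inv_word_def)
lemma inv_word_Cons[simp]: "inv_word (a # v) = inv_word v @ [(fst a, \<not> snd a)]"
  by (cases a) (simp add: inv_word_def)
lemma inv_word_Nil[simp]: "inv_word [] = []" by (simp add: inv_word_def)
lemma inv_word_inv_word[simp]: "inv_word (inv_word w) = w"
  by (induction w) auto
lemma inv_word_letters[simp]: "fst ` set (inv_word w) = fst ` set w"
  by (induction w) auto

lemma cancel_r: "pres_eq R (w @ inv_word w) []"
proof (induction w)
  case Nil then show ?case by simp
next
  case (Cons a w)
  obtain x b where a: "a = (x,b)" by fastforce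
  have "pres_eq R ([(x,b)] @ (w @ inv_word w) @ [(x,\<not>b)]) ([(x,b)] @ [] @ [(x,\<not>b)])"
    using Cons by (rule pe_congL)
  moreover have "pres_eq R [(x,b),(x,\<not>b)] []" by (rule pres_eq.cancel)
  ultimately show ?case using a by (auto intro: pres_eq.trans)
qed

lemma cancel_l: "pres_eq R (inv_word w @ w) []"
  using cancel_r[of R "inv_word w"] by simp

lemma pe_inv: assumes "pres_eq R u v" shows "pres_eq R (inv_word u) (inv_word v)"
proof -
  have "pres_eq R (inv_word u @ [] @ []) (inv_word u @ (v @ inv_word v) @ [])"
    by (rule pe_congL, rule pres_eq.sym, rule cancel_r)
  moreover have "pres_eq R (inv_word u @ v @ inv_word v) (inv_word u @ u @ inv_word v)"
    using pe_congL[OF pres_eq.sym[OF assms]] by simp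
  moreover have "pres_eq R ([] @ (inv_word u @ u) @ inv_word v) ([] @ [] @ inv_word v)"
    by (rule pe_congL, rule cancel_l)
  ultimately show ?thesis by (auto intro: pres_eq.trans)
qed

definition letter :: "('a \<Rightarrow> 'b word) \<Rightarrow> 'a \<times> bool \<Rightarrow> 'b word" where
  "letter f a = (if snd a then f (fst a) else inv_word (f (fst a)))"

definition subst :: "('a \<Rightarrow> 'b word) \<Rightarrow> 'a word \<Rightarrow> 'b word" where
  "subst f w = concat (map (letter f) w)"

lemma subst_Nil[simp]: "subst f [] = []" by (simp add: subst_def)
lemma subst_Cons[simp]: "subst f (a # w) = letter f a @ subst f w" by (simp add: subst_def)
lemma subst_append[simp]: "subst f (u @ v) = subst f u @ subst f v" by (simp add: subst_def)
lemma subst_pos[simp]: "subst f (pos_word xs) = concat (map f xs)"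
  by (induction xs) (auto simp: pos_word_def letter_def)

lemma subst_inv: "subst f (inv_word w) = inv_word (subst f w)"
  by (induction w) (auto simp: letter_def)

lemma subst_subst: "subst g (subst f w) = subst (\<lambda>x. subst g (f x)) w"
  by (induction w) (auto simp: letter_def subst_inv)

lemma subst_letters:
  assumes "fst ` set w \<subseteq> S1" "\<forall>x\<in>S1. fst ` set (f x) \<subseteq> S2"
  shows "fst ` set (subst f w) \<subseteq> S2"
  using assms
proof (induction w)
  case (Cons a w)
  have "fst ` set (letter f a) = fst ` set (f (fst a))" by (simp add: letter_def)
  moreover have "fst ` set (f (fst a)) \<subseteq> S2" using Cons.prems by auto
  moreover have "fst ` set (subst f w) \<subseteq> S2" using Cons by auto
  ultimately show ?case by (simp add: image_Un)
qed simp

lemma subst_pres: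
  assumes rels: "\<forall>(u,v)\<in>R1. pres_eq R2 (subst f u) (subst f v)"
  shows "pres_eq R1 u v \<Longrightarrow> pres_eq R2 (subst f u) (subst f v)"
proof (induction rule: pres_eq.induct)
  case (refl w) then show ?case by blast
next
  case (sym u v) then show ?case by (blast intro: pres_eq.sym)
next
  case (trans u v w) then show ?case by (blast intro: pres_eq.trans)
next
  case (cong u u' v v') then show ?case by (simp add: pres_eq.cong)
next
  case (cancel x b) then show ?case
    by (cases b) (simp_all add: letter_def cancel_r cancel_l)
next
  case (rel u v) then show ?case using rels by blast
qed

lemma class_eq: "pres_class R u = pres_class R v \<longleftrightarrow> pres_eq R u v"
proof
  assume "pres_class R u = pres_class R v"
  then have "v \<in> pres_class R u" by (auto simp: pres_class_def)
  then show "pres_eq R u v" by (simp add: pres_class_def)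
next
  assume "pres_eq R u v"
  then show "pres_class R u = pres_class R v"
    unfolding pres_class_def by (auto intro: pres_eq.trans pres_eq.sym)
qed

lemma mult_class:
  "pres_class R u \<otimes>\<^bsub>presented_group S R\<^esub> pres_class R v = pres_class R (u @ v)"
proof -
  have "\<And>u' v'. u' \<in> pres_class R u \<Longrightarrow> v' \<in> pres_class R v \<Longrightarrow> pres_class R (u' @ v') = pres_class R (u @ v)"
  proof -
    fix u' v' assume "u' \<in> pres_class R u" "v' \<in> pres_class R v"
    then have "pres_eq R (u @ v) (u' @ v')" by (simp add: pres_class_def pres_eq.cong)
    then show "pres_class R (u' @ v') = pres_class R (u @ v)" unfolding class_eq by (rule pres_eq.sym)
  qed
  moreover have "u \<in> pres_class R u" "v \<in> pres_class R v" by (auto simp: pres_class_def)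
  ultimately have "{pres_class R (u'@v') | u' v'. u' \<in> pres_class R u \<and> v' \<in> pres_class R v} = {pres_class R (u@v)}"
    by blast
  then show ?thesis by (simp add: presented_group_def)
qed

definition hmap :: "('a word \<times> 'a word) set \<Rightarrow> ('b word \<times> 'b word) set \<Rightarrow> ('a \<Rightarrow> 'b word) \<Rightarrow> 'a word set \<Rightarrow> 'b word set" where
  "hmap R1 R2 f A = pres_class R2 (subst f (SOME w. A = pres_class R1 w))"

lemma hmap_class:
  assumes rels: "\<forall>(u,v)\<in>R1. pres_eq R2 (subst f u) (subst f v)"
  shows "hmap R1 R2 f (pres_class R1 w) = pres_class R2 (subst f w)"
proof -
  have "\<exists>w'. pres_class R1 w = pres_class R1 w'" by blast
  then have "pres_class R1 w = pres_class R1 (SOME w'. pres_class R1 w = pres_class R1 w')"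
    by (rule someI_ex)
  then have "pres_eq R1 w (SOME w'. pres_class R1 w = pres_class R1 w')" by (simp add: class_eq)
  then have "pres_eq R2 (subst f w) (subst f (SOME w'. pres_class R1 w = pres_class R1 w'))"
    by (rule subst_pres[OF rels])
  then show ?thesis unfolding hmap_def class_eq by (rule pres_eq.sym)
qed

lemma hmap_hom:
  assumes rels: "\<forall>(u,v)\<in>R1. pres_eq R2 (subst f u) (subst f v)"
    and lets: "\<forall>x\<in>S1. fst ` set (f x) \<subseteq> S2"
  shows "hmap R1 R2 f \<in> hom (presented_group S1 R1) (presented_group S2 R2)"
proof -
  have "hmap R1 R2 f \<in> carrier (presented_group S1 R1) \<rightarrow> carrier (presented_group S2 R2)"
  proof
    fix A assume "A \<in> carrier (presented_group S1 R1)"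
    then obtain w where A: "A = pres_class R1 w" "fst ` set w \<subseteq> S1" by (auto simp: presented_group_def)
    show "hmap R1 R2 f A \<in> carrier (presented_group S2 R2)"
      using subst_letters[OF A(2) lets] unfolding A hmap_class[OF rels]
      by (simp add: presented_group_def) blast
  qed
  moreover have "\<forall>x\<in>carrier (presented_group S1 R1). \<forall>y\<in>carrier (presented_group S1 R1).
     hmap R1 R2 f (x \<otimes>\<^bsub>presented_group S1 R1\<^esub> y) =
     hmap R1 R2 f x \<otimes>\<^bsub>presented_group S2 R2\<^esub> hmap R1 R2 f y"
  proof (intro ballI)
    fix x y assume "x \<in> carrier (presented_group S1 R1)" "y \<in> carrier (presented_group S1 R1)"
    then obtain u v where "x = pres_class R1 u" "y = pres_class R1 v" by (auto simp: presented_group_def)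
    then show "hmap R1 R2 f (x \<otimes>\<^bsub>presented_group S1 R1\<^esub> y) =
     hmap R1 R2 f x \<otimes>\<^bsub>presented_group S2 R2\<^esub> hmap R1 R2 f y"
      by (simp only: mult_class hmap_class[OF rels] subst_append)
  qed
  ultimately show ?thesis by (simp add: hom_def)
qed

lemma subst_id:
  assumes "\<forall>x\<in>S. pres_eq R (h x) [(x,True)]" "fst ` set w \<subseteq> S"
  shows "pres_eq R (subst h w) w"
  using assms(2)
proof (induction w)
  case Nil then show ?case by simp
next
  case (Cons a w)
  obtain x b where a: "a = (x,b)" by fastforce
  have hx: "pres_eq R (h x) [(x,True)]" using Cons.prems assms(1) a by auto
  have "pres_eq R (letter h a) [a]"
    using hx pe_inv[OF hx] a by (cases b) (auto simp: letter_def)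
  moreover have "pres_eq R (subst h w) w" using Cons by auto
  ultimately show ?case by (simp add: pres_eq.cong[where u="letter h a" and u'="[a]", simplified])
qed

lemma roundtrip:
  assumes r1: "\<forall>(u,v)\<in>R1. pres_eq R2 (subst f u) (subst f v)"
    and r2: "\<forall>(u,v)\<in>R2. pres_eq R1 (subst g u) (subst g v)"
    and id: "\<forall>x\<in>S1. pres_eq R1 (subst g (f x)) [(x,True)]"
  shows "\<forall>A\<in>carrier (presented_group S1 R1). hmap R2 R1 g (hmap R1 R2 f A) = A"
proof
  fix A assume "A \<in> carrier (presented_group S1 R1)"
  then obtain w where A: "A = pres_class R1 w" "fst ` set w \<subseteq> S1" by (auto simp: presented_group_def)
  have "pres_eq R1 (subst (\<lambda>x. subst g (f x)) w) w" using subst_id[OF id A(2)] .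
  then show "hmap R2 R1 g (hmap R1 R2 f A) = A"
    by (simp add: A hmap_class[OF r1] hmap_class[OF r2] subst_subst class_eq)
qed



declare upt_Suc[simp del]

definition fphi :: "nat \<Rightarrow> nat \<Rightarrow> nat word" where
  "fphi n k = pos_word ([n + 2 - k..<n + 1] @ [1])"
definition gpsi :: "nat \<Rightarrow> nat \<Rightarrow> nat word" where
  "gpsi n j = (if j = 1 then pos_word [1] else pos_word [n + 2 - j] @ inv_word (pos_word [n + 1 - j]))"

lemma pos_word_append[simp]: "pos_word (xs @ ys) = pos_word xs @ pos_word ys"
  by (simp add: pos_word_def)
lemma pos_word_Cons[simp]: "pos_word (x # ys) = (x, True) # pos_word ys"
  by (simp add: pos_word_def)
lemma pos_word_Nil[simp]: "pos_word [] = []"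
  by (simp add: pos_word_def)

lemma cancel_mid_T: "pres_eq R (a @ [(x,True),(x,False)] @ c) (a @ c)"
  using pe_congL[OF pres_eq.cancel[of R x True], of a c] by simp
lemma cancel_mid_F: "pres_eq R (a @ [(x,False),(x,True)] @ c) (a @ c)"
  using pe_congL[OF pres_eq.cancel[of R x False], of a c] by simp

lemma gpsi_ge2: "j \<noteq> 1 \<Longrightarrow> gpsi n j = [(n + 2 - j, True), (n + 1 - j, False)]"
  by (simp add: gpsi_def inv_word_def pos_word_def)

lemma tele1: "m \<le> n - 1 \<Longrightarrow>
  pres_eq R (subst (gpsi n) (pos_word [n + 1 - m..<n + 1])) [(m + 1, True), (1, False)]"
proof (induction m)
  case 0
  then show ?case using cancel_mid_T[of R "[]" 1 "[]"] by (simp add: pres_eq.sym)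
next
  case (Suc m)
  have a1: "n + 1 - Suc m = n - m" by simp
  have a2: "Suc (n - m) = n + 1 - m" using Suc.prems by simp
  have a3: "n - m < n + 1" using Suc.prems by simp
  have e: "[n + 1 - Suc m..<n + 1] = (n - m) # [n + 1 - m..<n + 1]"
    unfolding a1 a2[symmetric] using a3 by (rule upt_conv_Cons)
  have g: "gpsi n (n - m) = [(m + 2, True), (m + 1, False)]"
    using Suc.prems by (simp add: gpsi_ge2)
  have IH: "pres_eq R (subst (gpsi n) (pos_word [n + 1 - m..<n + 1])) [(m + 1, True), (1, False)]"
    using Suc by simp
  have h1: "pres_eq R (subst (gpsi n) (pos_word [n + 1 - Suc m..<n + 1]))
      ([(m + 2, True), (m + 1, False)] @ [(m + 1, True), (1, False)])"
    using pe_congL[OF IH, of "[(m + 2, True), (m + 1, False)]" "[]"] e g by (simp add: letter_def)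
  have h2: "pres_eq R ([(m + 2, True), (m + 1, False)] @ [(m + 1, True), (1, False)]) [(m + 2, True), (1, False)]"
    using cancel_mid_F[of R "[(m + 2, True)]" "m + 1" "[(1, False)]"] by simp
  show ?case using pres_eq.trans[OF h1 h2] by simp
qed

lemma tele1': "2 \<le> j \<Longrightarrow> j \<le> n + 1 \<Longrightarrow>
  pres_eq R (subst (gpsi n) (pos_word [j..<n + 1])) [(n + 2 - j, True), (1, False)]"
  using tele1[of "n + 1 - j" n R] by (simp add: Suc_diff_le)

lemma tele2: "1 \<le> j \<Longrightarrow> j \<le> n \<Longrightarrow>
  pres_eq R (subst (gpsi n) (pos_word [2..<j + 1])) [(n, True), (n + 1 - j, False)]"
proof (induction j)
  case 0 then show ?case by simp
next
  case (Suc j)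
  show ?case
  proof (cases "j = 0")
    case True
    then show ?thesis using cancel_mid_T[of R "[]" n "[]"] by (simp add: pres_eq.sym)
  next
    case False
    have e: "[2..<Suc j + 1] = [2..<j + 1] @ [j + 1]" using False by (simp add: upt_Suc)
    have g: "gpsi n (j + 1) = [(n + 1 - j, True), (n - j, False)]"
      using False Suc.prems by (simp add: gpsi_ge2)
    have IH: "pres_eq R (subst (gpsi n) (pos_word [2..<j + 1])) [(n, True), (n + 1 - j, False)]"
      using Suc False by simp
    have h1: "pres_eq R (subst (gpsi n) (pos_word [2..<Suc j + 1]))
       ([(n, True), (n + 1 - j, False)] @ [(n + 1 - j, True), (n - j, False)])"
      using pe_congL[OF IH, of "[]" "[(n + 1 - j, True), (n - j, False)]"] e g by (simp add: letter_def)
    have h2: "pres_eq R ([(n, True), (n + 1 - j, False)] @ [(n + 1 - j, True), (n - j, False)]) [(n, True), (n - j, False)]"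
      using cancel_mid_F[of R "[(n, True)]" "n + 1 - j" "[(n - j, False)]"] by simp
    show ?thesis using pres_eq.trans[OF h1 h2] by simp
  qed
qed

lemma cyc_list: assumes "1 \<le> j" "j \<le> n"
  shows "map (\<lambda>t. (j - 1 + t) mod n + 1) [0..<n + 1] = [j..<n + 1] @ [1..<j + 1]"
proof (rule nth_equalityI)
  show "length (map (\<lambda>t. (j - 1 + t) mod n + 1) [0..<n + 1]) = length ([j..<n + 1] @ [1..<j + 1])"
    using assms by simp
next
  fix t assume "t < length (map (\<lambda>t. (j - 1 + t) mod n + 1) [0..<n + 1])"
  then have t: "t < n + 1" by simp
  show "map (\<lambda>t. (j - 1 + t) mod n + 1) [0..<n + 1] ! t = ([j..<n + 1] @ [1..<j + 1]) ! t"
  proof (cases "t < n + 1 - j")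
    case True
    then have "j - 1 + t < n" using assms by simp
    then show ?thesis using True t assms by (simp add: nth_append)
  next
    case False
    then have "n \<le> j - 1 + t" "j - 1 + t - n < n" using assms t by simp_all
    then have "(j - 1 + t) mod n = j - 1 + t - n" by (simp add: le_mod_geq)
    then show ?thesis using False t assms by (simp add: nth_append)
  qed
qed

lemma cyc_eq: assumes "1 \<le> j" "j \<le> n" shows "cyc_word n j = pos_word ([j..<n + 1] @ [1] @ [2..<j + 1])"
proof -
  have "[1..<j + 1] = 1 # [2..<j + 1]" using upt_conv_Cons[of 1 "j+1"] assms by (simp add: numeral_2_eq_2)
  then show ?thesis unfolding cyc_word_def using cyc_list[OF assms] by (simp only: append_Cons append_Nil)
qed

lemma x_chain: "1 \<le> j \<Longrightarrow> j \<le> n \<Longrightarrow> pres_eq (x_rels n) (cyc_word n j) (cyc_word n 1)"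
proof (induction j)
  case 0 then show ?case by simp
next
  case (Suc j)
  show ?case
  proof (cases "j = 0")
    case True then show ?thesis by simp
  next
    case False
    then have "(cyc_word n j, cyc_word n (j + 1)) \<in> x_rels n" using Suc.prems
      unfolding x_rels_def by auto
    then have "pres_eq (x_rels n) (cyc_word n (Suc j)) (cyc_word n j)"
      by (simp add: pres_eq.rel pres_eq.sym)
    moreover have "pres_eq (x_rels n) (cyc_word n j) (cyc_word n 1)" using Suc False by simp
    ultimately show ?thesis by (rule pres_eq.trans)
  qed
qed

lemma phi_rels: "\<forall>(u,v)\<in>rho_rels n. pres_eq (x_rels n) (subst (fphi n) u) (subst (fphi n) v)"
proof (clarify)
  fix u v assume "(u, v) \<in> rho_rels n"
  then obtain i where uv: "u = pos_word [1, n, i]" "v = pos_word [i + 1, n]" "1 \<le> i" "i \<le> n - 1"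
    unfolding rho_rels_def by blast
  define T where "T = pos_word ([n + 2 - i..<n + 1] @ [1])"
  have n1: "[1..<n + 1] = 1 # [2..<n + 1]" using uv upt_conv_Cons[of 1 "n+1"] by (simp add: numeral_2_eq_2)
  have c1: "cyc_word n 1 = pos_word ([1..<n + 1] @ [1])" using cyc_eq[of 1 n] uv by simp
  have su: "subst (fphi n) u = cyc_word n 1 @ T"
    using uv c1 n1 by (simp add: fphi_def T_def letter_def)
  have sp: "[2..<n + 2 - i] @ [n + 2 - i..<n + 1] = [2..<n + 1]"
    using upt_add_eq_append[of 2 "n + 2 - i" "i - 1"] uv by simp
  have ci: "cyc_word n (n + 1 - i) = pos_word ([n + 1 - i..<n + 1] @ [1] @ [2..<n + 2 - i])"
    using cyc_eq[of "n + 1 - i" n] uv by (simp add: Suc_diff_le)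
  have e2: "n + 2 - (i + 1) = n + 1 - i" by simp
  have sv: "subst (fphi n) v = cyc_word n (n + 1 - i) @ T"
    using uv ci sp[symmetric] by (simp add: fphi_def T_def e2 letter_def)
  have "pres_eq (x_rels n) (cyc_word n 1) (cyc_word n (n + 1 - i))"
  proof (rule pres_eq.sym, rule x_chain)
    show "1 \<le> n + 1 - i" "n + 1 - i \<le> n" using uv by auto
  qed
  then have "pres_eq (x_rels n) ([] @ cyc_word n 1 @ T) ([] @ cyc_word n (n + 1 - i) @ T)"
    by (rule pe_congL)
  then show "pres_eq (x_rels n) (subst (fphi n) u) (subst (fphi n) v)" using su sv by simp
qed


declare subst_pos[simp del]

lemma psi_W: assumes j: "1 \<le> j" "j \<le> n"
  shows "pres_eq (rho_rels n) (subst (gpsi n) (cyc_word n j)) [(1,True),(n,True)]"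
proof (cases "j = 1")
  case True
  have n1: "[1..<n + 1] = 1 # [2..<n + 1]" using j upt_conv_Cons[of 1 "n+1"] by (simp add: numeral_2_eq_2)
  have e: "subst (gpsi n) (cyc_word n j) = [(1,True)] @ subst (gpsi n) (pos_word [2..<n + 1]) @ [(1,True)]"
    using cyc_eq[OF j] True n1 by (simp add: letter_def gpsi_def)
  have t: "pres_eq (rho_rels n) (subst (gpsi n) (pos_word [2..<n + 1])) [(n, True), (1, False)]"
    using tele2[of n n "rho_rels n"] j by simp
  have h1: "pres_eq (rho_rels n) (subst (gpsi n) (cyc_word n j)) ([(1,True),(n,True)] @ [(1,False),(1,True)] @ [])"
    using pe_congL[OF t, of "[(1,True)]" "[(1,True)]"] e by simp
  show ?thesis using pres_eq.trans[OF h1 cancel_mid_F] by simp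
next
  case False
  define i where "i = n + 1 - j"
  have i: "1 \<le> i" "i \<le> n - 1" "n + 2 - j = i + 1" "n + 1 - j = i" using j False by (auto simp: i_def)
  have e: "subst (gpsi n) (cyc_word n j) = subst (gpsi n) (pos_word [j..<n + 1]) @ [(1,True)] @ subst (gpsi n) (pos_word [2..<j + 1])"
    using cyc_eq[OF j] by (simp add: letter_def gpsi_def)
  have t1: "pres_eq (rho_rels n) (subst (gpsi n) (pos_word [j..<n + 1])) [(i + 1, True), (1, False)]"
    using tele1'[of j n "rho_rels n"] j False i by simp
  have t2: "pres_eq (rho_rels n) (subst (gpsi n) (pos_word [2..<j + 1])) [(n, True), (i, False)]"
    using tele2[of j n "rho_rels n"] j i by simp
  have h1: "pres_eq (rho_rels n) (subst (gpsi n) (cyc_word n j))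
      ([(i + 1, True)] @ [(1, False),(1,True)] @ [(n, True), (i, False)])"
    using pres_eq.cong[OF t1 pres_eq.cong[OF pres_eq.refl[of _ "[(1,True)]"] t2]] e by simp
  have h2: "pres_eq (rho_rels n) ([(i + 1, True)] @ [(1, False),(1,True)] @ [(n, True), (i, False)])
      ([(i + 1, True), (n, True)] @ [(i, False)])"
    using cancel_mid_F[of "rho_rels n" "[(i + 1, True)]" 1 "[(n, True), (i, False)]"] by simp
  have "(pos_word [1, n, i], pos_word [i + 1, n]) \<in> rho_rels n" using i unfolding rho_rels_def by blast
  then have rr: "pres_eq (rho_rels n) ([(i + 1, True), (n, True)]) [(1,True),(n,True),(i,True)]"
    by (simp add: pres_eq.rel pres_eq.sym)
  have h3: "pres_eq (rho_rels n) ([(i + 1, True), (n, True)] @ [(i, False)]) ([(1,True),(n,True)] @ [(i,True),(i,False)] @ [])"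
    using pres_eq.cong[OF rr pres_eq.refl[of _ "[(i, False)]"]] by simp
  have h4: "pres_eq (rho_rels n) ([(1,True),(n,True)] @ [(i,True),(i,False)] @ []) [(1,True),(n,True)]"
    using cancel_mid_T[of "rho_rels n" "[(1,True),(n,True)]" i "[]"] by simp
  show ?thesis using pres_eq.trans[OF pres_eq.trans[OF pres_eq.trans[OF h1 h2] h3] h4] .
qed

lemma psi_rels: "\<forall>(u,v)\<in>x_rels n. pres_eq (rho_rels n) (subst (gpsi n) u) (subst (gpsi n) v)"
proof (clarify)
  fix u v assume "(u, v) \<in> x_rels n"
  then obtain j where uv: "u = cyc_word n j" "v = cyc_word n (j + 1)" "1 \<le> j" "j \<le> n - 1"
    unfolding x_rels_def by blast
  have a: "pres_eq (rho_rels n) (subst (gpsi n) u) [(1,True),(n,True)]" using psi_W[of j n] uv by simp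
  have b: "pres_eq (rho_rels n) (subst (gpsi n) v) [(1,True),(n,True)]" using psi_W[of "j + 1" n] uv by simp
  show "pres_eq (rho_rels n) (subst (gpsi n) u) (subst (gpsi n) v)"
    using pres_eq.trans[OF a pres_eq.sym[OF b]] .
qed

lemma rt1: "\<forall>k\<in>{1..n}. pres_eq (rho_rels n) (subst (gpsi n) (fphi n k)) [(k,True)]"
proof
  fix k assume k: "k \<in> {1..n}"
  have e: "subst (gpsi n) (fphi n k) = subst (gpsi n) (pos_word [n + 2 - k..<n + 1]) @ [(1,True)] @ []"
    by (simp add: fphi_def letter_def gpsi_def)
  have t: "pres_eq (rho_rels n) (subst (gpsi n) (pos_word [n + 2 - k..<n + 1])) [(k, True), (1, False)]"
  proof -
    have "pres_eq (rho_rels n) (subst (gpsi n) (pos_word [n + 2 - k..<n + 1])) [(n + 2 - (n + 2 - k), True), (1, False)]"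
      by (rule tele1') (use k in auto)
    moreover have "n + 2 - (n + 2 - k) = k" using k by auto
    ultimately show ?thesis by simp
  qed
  have h1: "pres_eq (rho_rels n) (subst (gpsi n) (fphi n k)) ([(k, True)] @ [(1, False), (1,True)] @ [])"
    using pe_congL[OF t, of "[]" "[(1,True)]"] e by simp
  show "pres_eq (rho_rels n) (subst (gpsi n) (fphi n k)) [(k,True)]"
    using pres_eq.trans[OF h1 cancel_mid_F] by simp
qed

lemma rt2: "\<forall>j\<in>{1..n}. pres_eq (x_rels n) (subst (fphi n) (gpsi n j)) [(j,True)]"
proof
  fix j assume j: "j \<in> {1..n}"
  show "pres_eq (x_rels n) (subst (fphi n) (gpsi n j)) [(j,True)]"
  proof (cases "j = 1")
    case True then show ?thesis by (simp add: gpsi_def fphi_def letter_def)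
  next
    case False
    define U where "U = pos_word ([j + 1..<n + 1] @ [1])"
    have a: "n + 2 - (n + 2 - j) = j" "n + 2 - (n + 1 - j) = j + 1" using j by auto
    have c: "[j..<n + 1] = j # [j + 1..<n + 1]" using j upt_conv_Cons[of j "n+1"] by simp
    have e: "subst (fphi n) (gpsi n j) = [(j,True)] @ (U @ inv_word U) @ []"
      using False a c unfolding gpsi_ge2[OF False] by (simp add: fphi_def letter_def U_def)
    show ?thesis using pe_congL[OF cancel_r[of "x_rels n" U], of "[(j,True)]" "[]"] e by simp
  qed
qed

lemma pos_letters[simp]: "fst ` set (pos_word xs) = set xs"
  by (induction xs) auto

lemma lets_f: "\<forall>x\<in>{1..n}. fst ` set (fphi n x) \<subseteq> {1..n}"
  by (auto simp: fphi_def)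

lemma lets_g: "\<forall>x\<in>{1..n}. fst ` set (gpsi n x) \<subseteq> {1..n}"
  by (auto simp: gpsi_def)



theorem proposition4p18:
  fixes n :: nat
  assumes "n \<ge> 1"
  shows "\<exists>\<phi> \<psi>.
    \<phi> \<in> iso (presented_group {1..n} (rho_rels n)) (presented_group {1..n} (x_rels n)) \<and>
    (\<forall>k \<in> {1..n}. \<phi> (pres_class (rho_rels n) (pos_word [k])) =
        pres_class (x_rels n) (pos_word ([n + 2 - k..<n + 1] @ [1]))) \<and>
    \<psi> \<in> hom (presented_group {1..n} (x_rels n)) (presented_group {1..n} (rho_rels n)) \<and>
    (\<forall>g \<in> carrier (presented_group {1..n} (rho_rels n)). \<psi> (\<phi> g) = g) \<and>
    (\<forall>h \<in> carrier (presented_group {1..n} (x_rels n)). \<phi> (\<psi> h) = h) \<and>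
    \<psi> (pres_class (x_rels n) (pos_word [1])) = pres_class (rho_rels n) (pos_word [1]) \<and>
    (\<forall>j \<in> {2..n}. \<psi> (pres_class (x_rels n) (pos_word [j])) =
        pres_class (rho_rels n) (pos_word [n + 2 - j] @ inv_word (pos_word [n + 1 - j])))"
proof -
  let ?G = "presented_group {1..n} (rho_rels n)"
  let ?H = "presented_group {1..n} (x_rels n)"
  define \<phi> where "\<phi> = hmap (rho_rels n) (x_rels n) (fphi n)"
  define \<psi> where "\<psi> = hmap (x_rels n) (rho_rels n) (gpsi n)"
  have h1: "\<phi> \<in> hom ?G ?H" unfolding \<phi>_def by (rule hmap_hom[OF phi_rels lets_f])
  have h2: "\<psi> \<in> hom ?H ?G" unfolding \<psi>_def by (rule hmap_hom[OF psi_rels lets_g])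
  have l1: "\<forall>g \<in> carrier ?G. \<psi> (\<phi> g) = g"
    unfolding \<phi>_def \<psi>_def by (rule roundtrip[OF phi_rels psi_rels rt1])
  have l2: "\<forall>h \<in> carrier ?H. \<phi> (\<psi> h) = h"
    unfolding \<phi>_def \<psi>_def by (rule roundtrip[OF psi_rels phi_rels rt2])
  have "bij_betw \<phi> (carrier ?G) (carrier ?H)"
    by (rule bij_betw_byWitness[OF l1 l2]) (use h1 h2 in \<open>auto simp: hom_def\<close>)
  then have i: "\<phi> \<in> iso ?G ?H" using h1 by (simp add: iso_def)
  have g1: "\<forall>k \<in> {1..n}. \<phi> (pres_class (rho_rels n) (pos_word [k])) =
        pres_class (x_rels n) (pos_word ([n + 2 - k..<n + 1] @ [1]))"
    unfolding \<phi>_def hmap_class[OF phi_rels] by (simp add: subst_pos fphi_def letter_def)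
  have g2: "\<psi> (pres_class (x_rels n) (pos_word [1])) = pres_class (rho_rels n) (pos_word [1])"
    unfolding \<psi>_def hmap_class[OF psi_rels] by (simp add: subst_pos gpsi_def letter_def)
  have g3: "\<forall>j \<in> {2..n}. \<psi> (pres_class (x_rels n) (pos_word [j])) =
        pres_class (rho_rels n) (pos_word [n + 2 - j] @ inv_word (pos_word [n + 1 - j]))"
    unfolding \<psi>_def hmap_class[OF psi_rels] by (simp add: subst_pos gpsi_def letter_def)
  show ?thesis using i g1 h2 l1 l2 g2 g3 by blast
qed

end
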